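(* Let $P_1$ be the uniform distribution on $[0,\frac12]$, let $P_2$ be the uniform distribution on $[\frac12,1]$, and let $P=\frac34P_1+\frac14P_2$. Then the set $\{\frac14,\frac34\}$ forms an optimal set of two-means for $P$, with quantization error $V_2=\frac1{48}$.
   Context: For a finite set $\alpha\subset\mathbb R$, $V(P;\alpha)=\int\min_{a\in\alpha}(x-a)^2\,dP(x)$; $V_n=\inf\{V(P;\alpha):\mathrm{card}(\alpha)\le n\}$; an optimal set of $n$-means is a set $\alpha$ with $\mathrm{card}(\alpha)\le n$ and $V(P;\alpha)=V_n$. *)

theory Defs
  imports "HOL-Probability.Probability"
begin

definition unif_dens :: "real \<Rightarrow> real \<Rightarrow> real \<Rightarrow> real" where
  "unif_dens a b x = indicator {a..b} x / (b - a)"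

definition P_mix :: "real measure" where
  "P_mix = density lborel (\<lambda>x. ennreal (3/4 * unif_dens 0 (1/2) x + 1/4 * unif_dens (1/2) 1 x))"

definition quant_err :: "real measure \<Rightarrow> real set \<Rightarrow> ennreal" where
  "quant_err P \<alpha> = (\<integral>\<^sup>+ x. ennreal (Min ((\<lambda>a. (x - a)^2) ` \<alpha>)) \<partial>P)"

definition Vn :: "real measure \<Rightarrow> nat \<Rightarrow> ennreal" where
  "Vn P n = (INF \<alpha> \<in> {\<alpha>. finite \<alpha> \<and> \<alpha> \<noteq> {} \<and> card \<alpha> \<le> n}. quant_err P \<alpha>)"

definition optimal_n_means :: "real measure \<Rightarrow> nat \<Rightarrow> real set \<Rightarrow> bool" where
  "optimal_n_means P n \<alpha> \<longleftrightarrow> finite \<alpha> \<and> \<alpha> \<noteq> {} \<and> card \<alpha> \<le> n \<and> quant_err P \<alpha> = Vn P n"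

end

theory Submission
  imports Defs
begin

definition Fc :: "real \<Rightarrow> real \<Rightarrow> real" where "Fc c x = (x - c)^3/3"
definition Ipart :: "real \<Rightarrow> real \<Rightarrow> real \<Rightarrow> real \<Rightarrow> real" where
 "Ipart a b l r = Fc a (max l (min r ((a+b)/2))) - Fc a l + (Fc b r - Fc b (max l (min r ((a+b)/2))))"
definition Eab :: "real \<Rightarrow> real \<Rightarrow> real" where "Eab a b = 3/2 * Ipart a b 0 (1/2) + 1/2 * Ipart a b (1/2) 1"

lemma Eab_opt: "Eab (1/4) (3/4) = 1/48"
  by (simp add: Eab_def Ipart_def Fc_def power3_eq_cube)

lemma Eab_lower: "Eab a b \<ge> 1/48"
proof -
  define m where "m = (a+b)/2"
  consider "m \<le> 0" | "0 \<le> m" "m \<le> 1/2" | "1/2 \<le> m" "m \<le> 1" | "1 \<le> m" by linarith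
  then show ?thesis
  proof cases
    case 1
    have s1: "max 0 (min (1/2) m) = 0" and s2: "max (1/2) (min 1 m) = 1/2" using 1 by auto
    have E: "Eab a b = 3/2*(Fc b (1/2) - Fc b 0) + 1/2*(Fc b 1 - Fc b (1/2))"
      unfolding Eab_def Ipart_def m_def[symmetric] s1 s2 by (simp add: field_simps)
    have e: "Eab a b = (b - 3/8)^2 + 13/192"
      unfolding E Fc_def by (simp add: power3_eq_cube power2_eq_square field_simps)
    show ?thesis unfolding e using zero_le_power2[of "b - 3/8"] by linarith
  next
    case 4
    have s1: "max 0 (min (1/2) m) = 1/2" and s2: "max (1/2) (min 1 m) = 1" using 4 by auto
    have E: "Eab a b = 3/2*(Fc a (1/2) - Fc a 0) + 1/2*(Fc a 1 - Fc a (1/2))"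
      unfolding Eab_def Ipart_def m_def[symmetric] s1 s2 by (simp add: field_simps)
    have e: "Eab a b = (a - 3/8)^2 + 13/192"
      unfolding E Fc_def by (simp add: power3_eq_cube power2_eq_square field_simps)
    show ?thesis unfolding e using zero_le_power2[of "a - 3/8"] by linarith
  next
    case 2
    define M0 where "M0 = 1 - 3*m/2"
    have s1: "max 0 (min (1/2) m) = m" and s2: "max (1/2) (min 1 m) = 1/2" using 2 by auto
    have E: "Eab a b = 3/2*(Fc a m - Fc a 0) + 3/2*(Fc b (1/2) - Fc b m) + 1/2*(Fc b 1 - Fc b (1/2))"
      unfolding Eab_def Ipart_def m_def[symmetric] s1 s2 by (simp add: field_simps)
    have id: "M0 * (Eab a b - 1/48) = M0 * (3/2 * m * (a - m/2)^2) + (M0*b - (3/8 - 3*m^2/4))^2 + 3/64 * (1 - 2*m)^3"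
      unfolding E M0_def Fc_def by (simp add: power3_eq_cube power2_eq_square field_simps)
    have M0: "M0 > 0" using 2 unfolding M0_def by linarith
    have "M0 * (3/2 * m * (a - m/2)^2) \<ge> 0" using M0 2 by simp
    moreover have "3/64 * (1 - 2*m)^3 \<ge> 0" using 2 by simp
    ultimately have "M0 * (Eab a b - 1/48) \<ge> 0" unfolding id using zero_le_power2 by (meson add_nonneg_nonneg)
    then show ?thesis using M0 by (simp add: zero_le_mult_iff)
  next
    case 3
    define N0 where "N0 = (1 + m)/2"
    have s1: "max 0 (min (1/2) m) = 1/2" and s2: "max (1/2) (min 1 m) = m" using 3 by auto
    have E: "Eab a b = 3/2*(Fc a (1/2) - Fc a 0) + 1/2*(Fc a m - Fc a (1/2)) + 1/2*(Fc b 1 - Fc b m)"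
      unfolding Eab_def Ipart_def m_def[symmetric] s1 s2 by (simp add: field_simps)
    have id: "N0 * (Eab a b - 1/48) = N0 * (1/2 * (1 - m) * (b - (1+m)/2)^2) + (N0*a - (1/8 + m^2/4))^2 + 1/64 * (1 - 2*m)^2 * (1 + 2*m)"
      unfolding E N0_def Fc_def by (simp add: power3_eq_cube power2_eq_square field_simps)
    have N0: "N0 > 0" using 3 unfolding N0_def by simp
    have "N0 * (1/2 * (1 - m) * (b - (1+m)/2)^2) \<ge> 0" using N0 3 by simp
    moreover have "1/64 * (1 - 2*m)^2 * (1 + 2*m) \<ge> 0" using 3 by simp
    ultimately have "N0 * (Eab a b - 1/48) \<ge> 0" unfolding id using zero_le_power2 by (meson add_nonneg_nonneg)
    then show ?thesis using N0 by (simp add: zero_le_mult_iff)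
  qed
qed

lemma int_sq:
  assumes "l \<le> r"
  shows "((\<lambda>x. (x-c)^2) has_integral (Fc c r - Fc c l)) {l..r}"
  unfolding Fc_def
proof (rule fundamental_theorem_of_calculus[OF assms])
  fix x :: real
  have "((\<lambda>x. (x-c)^3/3) has_real_derivative (x-c)^2) (at x within {l..r})"
    by (auto intro!: derivative_eq_intros simp: power2_eq_square)
  then show "((\<lambda>x. (x-c)^3/3) has_vector_derivative (x-c)^2) (at x within {l..r})"
    by (simp add: has_real_derivative_iff_has_vector_derivative)
qed

lemma min_left: fixes a b x :: real assumes "a \<le> b" "x \<le> (a+b)/2" shows "min ((x-a)^2) ((x-b)^2) = (x-a)^2"
proof -
  have "(x-a)^2 - (x-b)^2 = (b-a)*(2*x-a-b)" by (simp add: power2_eq_square algebra_simps)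
  moreover have "(b-a)*(2*x-a-b) \<le> 0" using assms by (simp add: mult_nonneg_nonpos)
  ultimately show ?thesis by simp
qed

lemma min_right: fixes a b x :: real assumes "a \<le> b" "x \<ge> (a+b)/2" shows "min ((x-a)^2) ((x-b)^2) = (x-b)^2"
proof -
  have "(x-a)^2 - (x-b)^2 = (b-a)*(2*x-a-b)" by (simp add: power2_eq_square algebra_simps)
  moreover have "(b-a)*(2*x-a-b) \<ge> 0" using assms by simp
  ultimately show ?thesis by simp
qed

lemma int_g:
  assumes ab: "a \<le> b" and lr: "l \<le> r"
  shows "((\<lambda>x. min ((x-a)^2) ((x-b)^2)) has_integral Ipart a b l r) {l..r}"
proof -
  define s where "s = max l (min r ((a+b)/2))"
  have ls: "l \<le> s" and sr: "s \<le> r" using lr unfolding s_def by auto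
  have 1: "((\<lambda>x. min ((x-a)^2) ((x-b)^2)) has_integral (Fc a s - Fc a l)) {l..s}"
  proof (rule has_integral_spike_finite[of "{s}", OF _ _ int_sq[OF ls]])
    fix x assume "x \<in> {l..s} - {s}"
    then have "x \<le> (a+b)/2" unfolding s_def by (auto simp: max_def min_def split: if_splits)
    then show "min ((x-a)^2) ((x-b)^2) = (x-a)^2" using min_left ab by blast
  qed simp
  have 2: "((\<lambda>x. min ((x-a)^2) ((x-b)^2)) has_integral (Fc b r - Fc b s)) {s..r}"
  proof (rule has_integral_spike_finite[of "{s}", OF _ _ int_sq[OF sr]])
    fix x assume "x \<in> {s..r} - {s}"
    then have "x \<ge> (a+b)/2" unfolding s_def by (auto simp: max_def min_def split: if_splits)
    then show "min ((x-a)^2) ((x-b)^2) = (x-b)^2" using min_right ab by blast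
  qed simp
  show ?thesis using has_integral_combine[OF ls sr 1 2] unfolding Ipart_def s_def by simp
qed

lemma Ipart_nonneg: "a \<le> b \<Longrightarrow> l \<le> r \<Longrightarrow> Ipart a b l r \<ge> 0"
  by (rule has_integral_nonneg[OF int_g]) auto

lemma P_mix_int:
  assumes g: "g \<in> borel_measurable borel" and nn: "\<And>x. g x \<ge> 0"
  shows "(\<integral>\<^sup>+x. ennreal (g x) \<partial>P_mix) =
     (\<integral>\<^sup>+x. ennreal (3/2 * g x) * indicator {0..1/2} x \<partial>lborel) +
     (\<integral>\<^sup>+x. ennreal (1/2 * g x) * indicator {1/2..1} x \<partial>lborel)"
proof -
  have "(\<integral>\<^sup>+x. ennreal (g x) \<partial>P_mix) =
     (\<integral>\<^sup>+x. ennreal (3/4 * unif_dens 0 (1/2) x + 1/4 * unif_dens (1/2) 1 x) * ennreal (g x) \<partial>lborel)"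
    unfolding P_mix_def using g by (subst nn_integral_density) (auto simp: unif_dens_def)
  also have "\<dots> = (\<integral>\<^sup>+x. ennreal (3/2 * g x) * indicator {0..1/2} x +
                         ennreal (1/2 * g x) * indicator {1/2..1} x \<partial>lborel)"
  proof (rule nn_integral_cong)
    fix x :: real
    show "ennreal (3/4 * unif_dens 0 (1/2) x + 1/4 * unif_dens (1/2) 1 x) * ennreal (g x) =
      ennreal (3/2 * g x) * indicator {0..1/2} x + ennreal (1/2 * g x) * indicator {1/2..1} x"
    proof -
      have d: "3/4 * unif_dens 0 (1/2) x + 1/4 * unif_dens (1/2) 1 x = 3/2 * indicator {0..1/2} x + 1/2 * indicator {1/2..1} x"
        by (simp add: unif_dens_def)
      have "ennreal (3/4 * unif_dens 0 (1/2) x + 1/4 * unif_dens (1/2) 1 x) * ennreal (g x)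
          = ennreal ((3/2 * indicator {0..1/2} x + 1/2 * indicator {1/2..1} x) * g x)"
        unfolding d using nn[of x] by (simp add: ennreal_mult)
      also have "\<dots> = ennreal (3/2 * g x * indicator {0..1/2} x) + ennreal (1/2 * g x * indicator {1/2..1} x)"
        using nn[of x] by (subst ennreal_plus[symmetric]) (simp_all add: algebra_simps)
      also have "\<dots> = ennreal (3/2 * g x) * indicator {0..1/2} x + ennreal (1/2 * g x) * indicator {1/2..1} x"
        by (simp add: indicator_def)
      finally show ?thesis .
    qed
  qed
  also have "\<dots> = (\<integral>\<^sup>+x. ennreal (3/2 * g x) * indicator {0..1/2} x \<partial>lborel) +
     (\<integral>\<^sup>+x. ennreal (1/2 * g x) * indicator {1/2..1} x \<partial>lborel)"
    using g by (intro nn_integral_add) auto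
  finally show ?thesis .
qed

lemma quant_pair:
  assumes ab: "a \<le> b"
  shows "quant_err P_mix {a,b} = ennreal (3/2 * Ipart a b 0 (1/2) + 1/2 * Ipart a b (1/2) 1)"
proof -
  let ?g = "\<lambda>x. min ((x-a)^2) ((x-b)^2)"
  have q: "quant_err P_mix {a,b} = (\<integral>\<^sup>+x. ennreal (?g x) \<partial>P_mix)"
    unfolding quant_err_def by simp
  have i1: "((\<lambda>x. 3/2 * ?g x) has_integral (3/2 * Ipart a b 0 (1/2))) {0..1/2}"
    by (rule has_integral_mult_right[OF int_g[OF ab]]) simp
  have 1: "(\<integral>\<^sup>+x. ennreal (3/2 * ?g x) * indicator {0..1/2} x \<partial>lborel) = ennreal (3/2 * Ipart a b 0 (1/2))"
    by (rule nn_integral_has_integral_lebesgue'[OF _ i1]) simp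
  have i2: "((\<lambda>x. 1/2 * ?g x) has_integral (1/2 * Ipart a b (1/2) 1)) {1/2..1}"
    by (rule has_integral_mult_right[OF int_g[OF ab]]) simp
  have 2: "(\<integral>\<^sup>+x. ennreal (1/2 * ?g x) * indicator {1/2..1} x \<partial>lborel) = ennreal (1/2 * Ipart a b (1/2) 1)"
    by (rule nn_integral_has_integral_lebesgue'[OF _ i2]) simp
  have m: "?g \<in> borel_measurable borel" by measurable
  have nn: "\<And>x. 0 \<le> ?g x" by simp
  show ?thesis unfolding q P_mix_int[OF m nn] 1 2
    using Ipart_nonneg[OF ab, of 0 "1/2"] Ipart_nonneg[OF ab, of "1/2" 1]
    by (intro ennreal_plus[symmetric]) simp_all
qed

lemma two_point:
  fixes \<alpha> :: "real set"
  assumes "finite \<alpha>" "\<alpha> \<noteq> {}" "card \<alpha> \<le> 2"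
  shows "\<exists>a b. a \<le> b \<and> \<alpha> = {a, b}"
proof -
  have "card \<alpha> = 1 \<or> card \<alpha> = 2" using assms by (metis card_0_eq le_Suc_eq numeral_2_eq_2 One_nat_def le_zero_eq)
  then show ?thesis
  proof
    assume "card \<alpha> = 1"
    then obtain a where "\<alpha> = {a}" by (auto simp: card_1_singleton_iff)
    then show ?thesis by auto
  next
    assume "card \<alpha> = 2"
    then obtain x y where "\<alpha> = {x, y}" by (auto simp: card_2_iff)
    show ?thesis
    proof (cases "x \<le> y")
      case True then show ?thesis using \<open>\<alpha> = {x, y}\<close> by blast
    next
      case False then have "y \<le> x" "\<alpha> = {y, x}" using \<open>\<alpha> = {x, y}\<close> by auto
      then show ?thesis by blast
    qed
  qed
qed

lemma quant_lower:
  fixes \<alpha> :: "real set"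
  assumes "finite \<alpha>" "\<alpha> \<noteq> {}" "card \<alpha> \<le> 2"
  shows "ennreal (1/48) \<le> quant_err P_mix \<alpha>"
proof -
  obtain a b where ab: "a \<le> b" "\<alpha> = {a, b}" using two_point[OF assms] by blast
  have "quant_err P_mix \<alpha> = ennreal (Eab a b)" unfolding ab(2) quant_pair[OF ab(1)] Eab_def ..
  then show ?thesis using Eab_lower[of a b] by (simp add: ennreal_leI)
qed

lemma quant_opt: "quant_err P_mix {1/4, 3/4} = ennreal (1/48)"
proof -
  have "quant_err P_mix {1/4, 3/4} = ennreal (Eab (1/4) (3/4))"
    using quant_pair[of "1/4" "3/4"] unfolding Eab_def by simp
  then show ?thesis using Eab_opt by simp
qed

theorem lemma4p4:
  shows "optimal_n_means P_mix 2 {1/4, 3/4} \<and> Vn P_mix 2 = ennreal (1/48)"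
proof -
  have mem: "{1/4, 3/4::real} \<in> {\<alpha>. finite \<alpha> \<and> \<alpha> \<noteq> {} \<and> card \<alpha> \<le> 2}" by simp
  have V: "Vn P_mix 2 = ennreal (1/48)"
  proof (rule antisym)
    show "Vn P_mix 2 \<le> ennreal (1/48)"
      unfolding Vn_def using INF_lower[OF mem, of "quant_err P_mix"] quant_opt by simp
    show "ennreal (1/48) \<le> Vn P_mix 2"
      unfolding Vn_def by (rule INF_greatest) (use quant_lower in auto)
  qed
  show ?thesis unfolding optimal_n_means_def V quant_opt by simp
qed

end
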